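(* Let $X$ be a compact Hausdorff space and $G$ a second-countable compact group acting continuously on $X$, and let $\alpha\colon G\to\mathrm{Aut}(C(X))$, $\alpha_g(f)(x)=f(g^{-1}\cdot x)$, be the induced action. Assume that $(G,C(G),\mathtt{Lt})$ is weakly equivariantly semiprojective with respect to the class of commutative C*-algebras. Then $\alpha$ has the Rokhlin property if and only if there is a homeomorphism $\sigma\colon X/G\times G\to X$ with $g\cdot\sigma(Gx,h)=\sigma(Gx,gh)$ for all $g,h\in G$ and $x\in X$.
   Context: $\mathtt{Lt}_g(f)(h)=f(g^{-1}h)$. For a C*-algebra $C$ with continuous $G$-action: $C_\infty=\ell^\infty(\mathbb N,C)/c_0(\mathbb N,C)$ with quotient map $\kappa_C$, with coordinatewise induced actions. $(G,C(G),\mathtt{Lt})$ is weakly equivariantly semiprojective with respect to commutative C*-algebras if for every commutative C*-algebra $C$ with continuous $G$-action and every equivariant homomorphism $\varphi\colon C(G)\to C_\infty$ there is an equivariant homomorphism $\psi\colon C(G)\to\ell^\infty(\mathbb N,C)$ with $\kappa_C\circ\psi=\varphi$. Rokhlin property for an action $\alpha$ on a unital $A$: with $A$ embedded in $A_\infty$ as constant sequences, $\alpha^\infty$ coordinatewise on $\ell^\infty(\mathbb N,A)$, $\ell^\infty_\alpha(\mathbb N,A)$ the sequences $a$ with $g\mapsto\alpha^\infty_g(a)$ norm continuous, $A_{\infty,\alpha}=\kappa_A(\ell^\infty_\alpha(\mathbb N,A))$ with action $\alpha_\infty$: there is a unital homomorphism $\varphi\colon C(G)\to A_{\infty,\alpha}\cap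 A'$ with $\varphi\circ\mathtt{Lt}_g=(\alpha_\infty)_g\circ\varphi$ for all $g$. *)

theory Defs
  imports "HOL-Analysis.Analysis"
begin

definition bdd_fun :: "('c \<Rightarrow> complex) \<Rightarrow> bool" where
  "bdd_fun f \<longleftrightarrow> bdd_above (range (\<lambda>x. cmod (f x)))"

definition supnorm :: "('c \<Rightarrow> complex) \<Rightarrow> real" where
  "supnorm f = (SUP x. cmod (f x))"

definition comm_cstar_alg :: "('c \<Rightarrow> complex) set \<Rightarrow> bool" where
  "comm_cstar_alg C \<longleftrightarrow>
     (\<forall>f\<in>C. bdd_fun f) \<and> (\<lambda>x. 0) \<in> C \<and>
     (\<forall>f\<in>C. \<forall>h\<in>C. (\<lambda>x. f x + h x) \<in> C \<and> (\<lambda>x. f x * h x) \<in> C) \<and>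
     (\<forall>c. \<forall>f\<in>C. (\<lambda>x. c * f x) \<in> C) \<and>
     (\<forall>f\<in>C. (\<lambda>x. cnj (f x)) \<in> C) \<and>
     (\<forall>f. bdd_fun f \<and> (\<forall>e>0. \<exists>h\<in>C. supnorm (\<lambda>x. f x - h x) < e) \<longrightarrow> f \<in> C)"

definition cont_action_on ::
  "('g::{group_add,topological_space} \<Rightarrow> ('c \<Rightarrow> complex) \<Rightarrow> ('c \<Rightarrow> complex)) \<Rightarrow> ('c \<Rightarrow> complex) set \<Rightarrow> bool" where
  "cont_action_on \<gamma> C \<longleftrightarrow>
     (\<forall>g. \<forall>f\<in>C. \<gamma> g f \<in> C) \<and>
     (\<forall>g. \<forall>f\<in>C. \<forall>h\<in>C. \<gamma> g (\<lambda>x. f x + h x) = (\<lambda>x. \<gamma> g f x + \<gamma> g h x) \<and>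
                        \<gamma> g (\<lambda>x. f x * h x) = (\<lambda>x. \<gamma> g f x * \<gamma> g h x)) \<and>
     (\<forall>g c. \<forall>f\<in>C. \<gamma> g (\<lambda>x. c * f x) = (\<lambda>x. c * \<gamma> g f x)) \<and>
     (\<forall>g. \<forall>f\<in>C. \<gamma> g (\<lambda>x. cnj (f x)) = (\<lambda>x. cnj (\<gamma> g f x))) \<and>
     (\<forall>f\<in>C. \<gamma> 0 f = f) \<and>
     (\<forall>g h. \<forall>f\<in>C. \<gamma> (g + h) f = \<gamma> g (\<gamma> h f)) \<and>
     (\<forall>f\<in>C. \<forall>g0. \<forall>e>0. \<exists>U. open U \<and> g0 \<in> U \<and>
        (\<forall>g\<in>U. supnorm (\<lambda>x. \<gamma> g f x - \<gamma> g0 f x) < e))"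

section \<open>Sequence algebras; C_infty is handled via representatives modulo c_0\<close>

definition linf :: "('c \<Rightarrow> complex) set \<Rightarrow> (nat \<Rightarrow> 'c \<Rightarrow> complex) set" where
  "linf C = {a. (\<forall>n. a n \<in> C) \<and> bdd_above (range (\<lambda>n. supnorm (a n)))}"

definition seqnorm :: "(nat \<Rightarrow> 'c \<Rightarrow> complex) \<Rightarrow> real" where
  "seqnorm a = (SUP n. supnorm (a n))"

definition null_seq :: "(nat \<Rightarrow> 'c \<Rightarrow> complex) \<Rightarrow> bool" where
  "null_seq a \<longleftrightarrow> (\<lambda>n. supnorm (a n)) \<longlonglongrightarrow> 0"

definition asymp_eq :: "(nat \<Rightarrow> 'c \<Rightarrow> complex) \<Rightarrow> (nat \<Rightarrow> 'c \<Rightarrow> complex) \<Rightarrow> bool" where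
  "asymp_eq a b \<longleftrightarrow> null_seq (\<lambda>n x. a n x - b n x)"

definition CG :: "('g::topological_space \<Rightarrow> complex) set" where
  "CG = {f. continuous_on UNIV f}"

definition Lt :: "'g::group_add \<Rightarrow> ('g \<Rightarrow> complex) \<Rightarrow> ('g \<Rightarrow> complex)" where
  "Lt g f = (\<lambda>h. f (- g + h))"

text \<open>kappa o Phi is a *-homomorphism from D into C_infty\<close>
definition hom_mod :: "('g \<Rightarrow> complex) set \<Rightarrow> (('g \<Rightarrow> complex) \<Rightarrow> nat \<Rightarrow> 'c \<Rightarrow> complex) \<Rightarrow> bool" where
  "hom_mod D \<Phi> \<longleftrightarrow>
     (\<forall>f\<in>D. \<forall>h\<in>D. asymp_eq (\<Phi> (\<lambda>y. f y + h y)) (\<lambda>n x. \<Phi> f n x + \<Phi> h n x) \<and>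
                    asymp_eq (\<Phi> (\<lambda>y. f y * h y)) (\<lambda>n x. \<Phi> f n x * \<Phi> h n x)) \<and>
     (\<forall>c. \<forall>f\<in>D. asymp_eq (\<Phi> (\<lambda>y. c * f y)) (\<lambda>n x. c * \<Phi> f n x)) \<and>
     (\<forall>f\<in>D. asymp_eq (\<Phi> (\<lambda>y. cnj (f y))) (\<lambda>n x. cnj (\<Phi> f n x)))"

definition star_hom :: "('g \<Rightarrow> complex) set \<Rightarrow> (('g \<Rightarrow> complex) \<Rightarrow> nat \<Rightarrow> 'c \<Rightarrow> complex) \<Rightarrow> bool" where
  "star_hom D \<Psi> \<longleftrightarrow>
     (\<forall>f\<in>D. \<forall>h\<in>D. \<Psi> (\<lambda>y. f y + h y) = (\<lambda>n x. \<Psi> f n x + \<Psi> h n x) \<and>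
                    \<Psi> (\<lambda>y. f y * h y) = (\<lambda>n x. \<Psi> f n x * \<Psi> h n x)) \<and>
     (\<forall>c. \<forall>f\<in>D. \<Psi> (\<lambda>y. c * f y) = (\<lambda>n x. c * \<Psi> f n x)) \<and>
     (\<forall>f\<in>D. \<Psi> (\<lambda>y. cnj (f y)) = (\<lambda>n x. cnj (\<Psi> f n x)))"

section \<open>Weak equivariant semiprojectivity w.r.t. commutative C*-algebras
  (realised as function algebras on the type 'c)\<close>

definition wesp_comm_Lt :: "'g::{group_add,topological_space} itself \<Rightarrow> 'c itself \<Rightarrow> bool" where
  "wesp_comm_Lt _ _ \<longleftrightarrow>
    (\<forall>(C::('c \<Rightarrow> complex) set) (\<gamma>::'g \<Rightarrow> ('c \<Rightarrow> complex) \<Rightarrow> ('c \<Rightarrow> complex)).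
      comm_cstar_alg C \<and> cont_action_on \<gamma> C \<longrightarrow>
      (\<forall>\<Phi>::('g \<Rightarrow> complex) \<Rightarrow> nat \<Rightarrow> 'c \<Rightarrow> complex.
         (\<forall>f\<in>CG. \<Phi> f \<in> linf C) \<and> hom_mod CG \<Phi> \<and>
         (\<forall>g. \<forall>f\<in>CG. asymp_eq (\<Phi> (Lt g f)) (\<lambda>n. \<gamma> g (\<Phi> f n)))
       \<longrightarrow> (\<exists>\<Psi>::('g \<Rightarrow> complex) \<Rightarrow> nat \<Rightarrow> 'c \<Rightarrow> complex.
              (\<forall>f\<in>CG. \<Psi> f \<in> linf C) \<and> star_hom CG \<Psi> \<and>
              (\<forall>g. \<forall>f\<in>CG. \<Psi> (Lt g f) = (\<lambda>n. \<gamma> g (\<Psi> f n))) \<and>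
              (\<forall>f\<in>CG. asymp_eq (\<Psi> f) (\<Phi> f)))))"

definition topological_group :: "'g::{group_add,topological_space} itself \<Rightarrow> bool" where
  "topological_group _ \<longleftrightarrow>
     continuous_on UNIV (\<lambda>p::'g \<times> 'g. fst p + snd p) \<and> continuous_on UNIV (\<lambda>g::'g. - g)"

definition continuous_group_action :: "('g::{group_add,topological_space} \<Rightarrow> 'x::topological_space \<Rightarrow> 'x) \<Rightarrow> bool" where
  "continuous_group_action act \<longleftrightarrow>
     continuous_on UNIV (\<lambda>p::'g \<times> 'x. act (fst p) (snd p)) \<and>
     (\<forall>x. act 0 x = x) \<and> (\<forall>g h x. act (g + h) x = act g (act h x))"

definition CX :: "('x::topological_space \<Rightarrow> complex) set" where
  "CX = {f. continuous_on UNIV f}"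

definition induced_action :: "('g::group_add \<Rightarrow> 'x \<Rightarrow> 'x) \<Rightarrow> 'g \<Rightarrow> ('x \<Rightarrow> complex) \<Rightarrow> ('x \<Rightarrow> complex)" where
  "induced_action act g f = (\<lambda>x. f (act (- g) x))"

definition linf_alpha :: "('g::{group_add,topological_space} \<Rightarrow> 'x \<Rightarrow> 'x) \<Rightarrow> ('x \<Rightarrow> complex) set \<Rightarrow> (nat \<Rightarrow> 'x \<Rightarrow> complex) set" where
  "linf_alpha act A = {a \<in> linf A. \<forall>g0. \<forall>e>0. \<exists>U. open U \<and> g0 \<in> U \<and>
      (\<forall>g\<in>U. seqnorm (\<lambda>n x. induced_action act g (a n) x - induced_action act g0 (a n) x) < e)}"

definition rokhlin :: "('g::{group_add,topological_space} \<Rightarrow> 'x::topological_space \<Rightarrow> 'x) \<Rightarrow> bool" where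
  "rokhlin act \<longleftrightarrow>
    (\<exists>\<Phi>::('g \<Rightarrow> complex) \<Rightarrow> nat \<Rightarrow> 'x \<Rightarrow> complex.
       (\<forall>f\<in>CG. \<Phi> f \<in> linf_alpha act CX) \<and> hom_mod CG \<Phi> \<and>
       asymp_eq (\<Phi> (\<lambda>_. 1)) (\<lambda>n x. 1) \<and>
       (\<forall>f\<in>CG. \<forall>b\<in>CX. null_seq (\<lambda>n x. \<Phi> f n x * b x - b x * \<Phi> f n x)) \<and>
       (\<forall>g. \<forall>f\<in>CG. asymp_eq (\<Phi> (Lt g f)) (\<lambda>n. induced_action act g (\<Phi> f n))))"

definition orbit :: "('g \<Rightarrow> 'x \<Rightarrow> 'x) \<Rightarrow> 'x \<Rightarrow> 'x set" where
  "orbit act x = range (\<lambda>g. act g x)"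

definition orbits :: "('g \<Rightarrow> 'x \<Rightarrow> 'x) \<Rightarrow> 'x set set" where
  "orbits act = range (orbit act)"

definition orbit_space_topology :: "('g \<Rightarrow> 'x::topological_space \<Rightarrow> 'x) \<Rightarrow> 'x set topology" where
  "orbit_space_topology act = topology (\<lambda>U. U \<subseteq> orbits act \<and> open (\<Union>U))"

end

theory Submission
  imports Defs
begin

lemma supnorm_ge: "bdd_fun f \<Longrightarrow> cmod (f x) \<le> supnorm f"
  unfolding bdd_fun_def supnorm_def by (rule cSUP_upper) auto

lemma supnorm_le: "(\<And>x. cmod (f x) \<le> B) \<Longrightarrow> supnorm f \<le> B"
  unfolding supnorm_def by (rule cSUP_least) auto

lemma supnorm_zero: "supnorm (\<lambda>x. 0) = 0"
  unfolding supnorm_def by simp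

lemma cont_bdd:
  assumes "compact (UNIV::'x::topological_space set)" "continuous_on UNIV (f::'x \<Rightarrow> complex)"
  shows "bdd_fun f"
proof -
  have "compact (range f)" using compact_continuous_image assms by blast
  then obtain B where "\<forall>y\<in>range f. norm y \<le> B" using compact_imp_bounded bounded_iff by metis
  then show ?thesis unfolding bdd_fun_def bdd_above_def by auto
qed

lemma bdd_diff: "bdd_fun f \<Longrightarrow> bdd_fun h \<Longrightarrow> bdd_fun (\<lambda>x. f x - h x)"
proof -
  assume "bdd_fun f" "bdd_fun h"
  then obtain A B where "\<And>x. cmod (f x) \<le> A" "\<And>x. cmod (h x) \<le> B"
    unfolding bdd_fun_def bdd_above_def by auto
  then have "\<And>x. cmod (f x - h x) \<le> A + B" by (meson add_mono norm_triangle_ineq4 order_trans)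
  then show ?thesis unfolding bdd_fun_def bdd_above_def by auto
qed

lemma CX_cstar:
  assumes "compact (UNIV::'x::t2_space set)"
  shows "comm_cstar_alg (CX :: ('x \<Rightarrow> complex) set)"
  unfolding comm_cstar_alg_def
proof (intro conjI ballI allI impI)
  fix f :: "'x \<Rightarrow> complex" assume "f \<in> CX" then show "bdd_fun f"
    using cont_bdd[OF assms] by (auto simp: CX_def)
next
  show "(\<lambda>x. 0) \<in> (CX :: ('x \<Rightarrow> complex) set)" by (auto simp: CX_def)
next
  fix f h :: "'x \<Rightarrow> complex" assume "f \<in> CX" "h \<in> CX"
  then show "(\<lambda>x. f x + h x) \<in> CX" "(\<lambda>x. f x * h x) \<in> CX"
    by (auto simp: CX_def intro!: continuous_intros)
next
  fix c and f :: "'x \<Rightarrow> complex" assume "f \<in> CX"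
  then show "(\<lambda>x. c * f x) \<in> CX" by (auto simp: CX_def intro!: continuous_intros)
next
  fix f :: "'x \<Rightarrow> complex" assume "f \<in> CX"
  then show "(\<lambda>x. cnj (f x)) \<in> CX" by (auto simp: CX_def intro!: continuous_intros)
next
  fix f :: "'x \<Rightarrow> complex"
  assume H: "bdd_fun f \<and> (\<forall>e>0. \<exists>h\<in>CX. supnorm (\<lambda>x. f x - h x) < e)"
  have "isCont f x0" for x0
    unfolding isCont_def tendsto_iff
  proof (intro allI impI)
    fix e :: real assume "e > 0"
    then obtain h where h: "h \<in> CX" "supnorm (\<lambda>x. f x - h x) < e/3" using H
      by (meson divide_pos_pos zero_less_numeral)
    have bh: "bdd_fun (\<lambda>x. f x - h x)" using bdd_diff H h cont_bdd[OF assms] by (auto simp: CX_def)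
    have close: "cmod (f x - h x) < e/3" for x using supnorm_ge[OF bh, of x] h by simp
    have "isCont h x0" using h by (auto simp: CX_def continuous_on_eq_continuous_at)
    then have "eventually (\<lambda>x. dist (h x) (h x0) < e/3) (at x0)"
      unfolding isCont_def tendsto_iff using \<open>e>0\<close> by (meson divide_pos_pos zero_less_numeral)
    then show "eventually (\<lambda>x. dist (f x) (f x0) < e) (at x0)"
    proof (rule eventually_mono)
      fix x assume "dist (h x) (h x0) < e/3"
      moreover have "dist (f x) (f x0) \<le> cmod (f x - h x) + dist (h x) (h x0) + cmod (f x0 - h x0)"
      proof -
        have "f x - f x0 = (f x - h x) + (h x - h x0) - (f x0 - h x0)" by simp
        then have "cmod (f x - f x0) \<le> cmod ((f x - h x) + (h x - h x0)) + cmod (f x0 - h x0)"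
          by (metis norm_triangle_ineq4)
        also have "\<dots> \<le> cmod (f x - h x) + cmod (h x - h x0) + cmod (f x0 - h x0)"
          using norm_triangle_ineq[of "f x - h x" "h x - h x0"] by linarith
        finally show ?thesis by (simp add: dist_norm)
      qed
      ultimately show "dist (f x) (f x0) < e" using close[of x] close[of x0] by linarith
    qed
  qed
  then show "f \<in> CX" by (auto simp: CX_def continuous_on_eq_continuous_at)
qed

lemma act_cont_neg:
  fixes act :: "'g::{group_add,topological_space} \<Rightarrow> 'x::topological_space \<Rightarrow> 'x"
  assumes "continuous_group_action act" "continuous_on UNIV (\<lambda>g::'g. -g)"
    and "continuous_on UNIV (a :: 'p::topological_space \<Rightarrow> 'g)" "continuous_on UNIV (b :: 'p \<Rightarrow> 'x)"
  shows "continuous_on UNIV (\<lambda>p. act (a p) (b p))"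
proof -
  have A: "continuous_on UNIV (\<lambda>p::'g \<times> 'x. act (fst p) (snd p))"
    using assms(1) by (simp add: continuous_group_action_def)
  have "continuous_on UNIV (\<lambda>p. (a p, b p))" using assms(3,4) by (intro continuous_intros)
  from continuous_on_compose2[OF A this] show ?thesis by simp
qed

lemma induced_cont:
  fixes act :: "'g::{group_add,topological_space} \<Rightarrow> 'x::topological_space \<Rightarrow> 'x"
  assumes "compact (UNIV::'x set)" "continuous_group_action act" "continuous_on UNIV (\<lambda>g::'g. -g)"
    and "continuous_on UNIV (f::'x \<Rightarrow> complex)" "e > 0"
  shows "\<exists>U. open U \<and> g0 \<in> U \<and> (\<forall>g\<in>U. supnorm (\<lambda>x. induced_action act g f x - induced_action act g0 f x) < e)"
proof -
  define F where "F p = f (act (- fst p) (snd p))" for p :: "'g \<times> 'x"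
  have n: "continuous_on UNIV (\<lambda>p::'g\<times>'x. - fst p)"
    using continuous_on_compose2[OF assms(3) continuous_on_fst[OF continuous_on_id]] by simp
  have c1: "continuous_on UNIV (\<lambda>p::'g\<times>'x. act (- fst p) (snd p))"
    by (rule act_cont_neg[OF assms(2,3) n]) (intro continuous_intros)
  have cF: "continuous_on UNIV F"
    unfolding F_def using continuous_on_compose2[OF assms(4) c1 subset_UNIV] .
  have c2: "continuous_on UNIV (\<lambda>p::'g\<times>'x. act (- g0) (snd p))"
    by (rule act_cont_neg[OF assms(2,3)]) (intro continuous_intros)+
  have cF0: "continuous_on UNIV (\<lambda>p::'g\<times>'x. F (g0, snd p))"
    unfolding F_def fst_conv snd_conv using continuous_on_compose2[OF assms(4) c2 subset_UNIV] .
  define W where "W = {p. cmod (F p - F (g0, snd p)) < e/2}"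
  have "open W" unfolding W_def
  proof (rule open_Collect_less)
    show "continuous_on UNIV (\<lambda>p. cmod (F p - F (g0, snd p)))"
      by (intro continuous_on_norm continuous_on_diff cF cF0)
  qed auto
  moreover have "{g0} \<times> UNIV \<subseteq> W" using assms(5) by (auto simp: W_def)
  ultimately obtain U where U: "g0 \<in> U" "open U" "U \<times> UNIV \<subseteq> W"
    using Elementary_Topology.tube_lemma[OF assms(1)] by metis
  have "supnorm (\<lambda>x. induced_action act g f x - induced_action act g0 f x) < e" if "g \<in> U" for g
  proof -
    have "supnorm (\<lambda>x. induced_action act g f x - induced_action act g0 f x) \<le> e/2"
    proof (rule supnorm_le)
      fix x have "(g, x) \<in> W" using U that by auto
      then show "cmod (induced_action act g f x - induced_action act g0 f x) \<le> e/2"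
        by (simp add: W_def F_def induced_action_def)
    qed
    then show ?thesis using assms(5) by linarith
  qed
  then show ?thesis using U by blast
qed

lemma induced_in_CX:
  fixes act :: "'g::{group_add,topological_space} \<Rightarrow> 'x::topological_space \<Rightarrow> 'x"
  assumes "continuous_group_action act" "continuous_on UNIV (\<lambda>g::'g. -g)" "f \<in> CX"
  shows "induced_action act g f \<in> CX"
proof -
  have "continuous_on UNIV (\<lambda>x. act (- g) x)"
    by (rule act_cont_neg[OF assms(1,2)]) (intro continuous_intros)+
  then show ?thesis using continuous_on_compose2[of UNIV f] assms(3)
    unfolding CX_def induced_action_def by auto
qed

lemma induced_cont_action:
  fixes act :: "'g::{group_add,topological_space} \<Rightarrow> 'x::topological_space \<Rightarrow> 'x"
  assumes "compact (UNIV::'x set)" "continuous_group_action act" "continuous_on UNIV (\<lambda>g::'g. -g)"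
  shows "cont_action_on (induced_action act) CX"
  unfolding cont_action_on_def
proof (intro conjI allI ballI impI)
  fix g f assume "(f::'x\<Rightarrow>complex) \<in> CX" then show "induced_action act g f \<in> CX"
    using induced_in_CX assms by blast
next
  fix f :: "'x\<Rightarrow>complex" show "induced_action act 0 f = f"
    using assms(2) by (simp add: induced_action_def continuous_group_action_def)
next
  fix g h :: 'g and f :: "'x\<Rightarrow>complex"
  show "induced_action act (g + h) f = induced_action act g (induced_action act h f)"
    using assms(2) unfolding induced_action_def continuous_group_action_def
    by (metis minus_add)
next
  fix f :: "'x\<Rightarrow>complex" and g0 :: 'g and e :: real
  assume "f \<in> CX" "e > 0"
  then show "\<exists>U. open U \<and> g0 \<in> U \<and> (\<forall>g\<in>U. supnorm (\<lambda>x. induced_action act g f x - induced_action act g0 f x) < e)"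
    using induced_cont[OF assms] by (auto simp: CX_def)
qed (auto simp: induced_action_def)

lemma character_eval:
  fixes ch :: "('g::topological_space \<Rightarrow> complex) \<Rightarrow> complex"
  assumes cpt: "compact (UNIV::'g set)"
   and one: "ch (\<lambda>_. 1) = 1"
   and add: "\<And>f h. f \<in> CG \<Longrightarrow> h \<in> CG \<Longrightarrow> ch (\<lambda>y. f y + h y) = ch f + ch h"
   and mult: "\<And>f h. f \<in> CG \<Longrightarrow> h \<in> CG \<Longrightarrow> ch (\<lambda>y. f y * h y) = ch f * ch h"
   and scal: "\<And>c f. f \<in> CG \<Longrightarrow> ch (\<lambda>y. c * f y) = c * ch f"
  shows "\<exists>t. \<forall>f\<in>CG. ch f = f t"
proof (rule ccontr)
  assume "\<not> ?thesis"
  then have "\<forall>t. \<exists>f\<in>CG. ch f \<noteq> f t" by auto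
  then obtain F where F: "\<And>t. F t \<in> CG" "\<And>t. ch (F t) \<noteq> F t t" by metis
  have c1: "(\<lambda>_. 1) \<in> (CG :: ('g \<Rightarrow> complex) set)" by (simp add: CG_def)
  have cc: "ch (\<lambda>_. c) = c" for c using scal[OF c1, of c] one by simp
  have ccG: "(\<lambda>_. c) \<in> (CG :: ('g \<Rightarrow> complex) set)" for c by (simp add: CG_def)
  define K where "K t = (\<lambda>y. F t y + - ch (F t))" for t
  have KG: "K t \<in> CG" for t using F(1)[of t] by (auto simp: K_def CG_def intro!: continuous_intros)
  have K0: "ch (K t) = 0" for t unfolding K_def using add[OF F(1) ccG, of t "- ch (F t)"] cc by simp
  have Kt: "K t t \<noteq> 0" for t using F(2)[of t] by (simp add: K_def)
  have cnjG: "(\<lambda>y. cnj (f y)) \<in> CG" if "f \<in> CG" for f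
    using that by (auto simp: CG_def intro!: continuous_intros)
  have "open {y. K t y \<noteq> 0}" for t
    using KG[of t] by (intro open_Collect_neq) (auto simp: CG_def)
  moreover have "UNIV \<subseteq> (\<Union>t\<in>UNIV. {y. K t y \<noteq> 0})" using Kt by auto
  ultimately obtain T where T: "finite T" "UNIV \<subseteq> (\<Union>t\<in>T. {y. K t y \<noteq> 0})"
    using compactE_image[OF cpt, of UNIV "\<lambda>t. {y. K t y \<noteq> 0}"] by metis
  define H where "H S = (\<lambda>y. \<Sum>t\<in>S. K t y * cnj (K t y))" for S
  have HS: "finite S \<Longrightarrow> H S \<in> CG \<and> ch (H S) = 0" for S
  proof (induction S rule: finite_induct)
    case empty
    then show ?case using cc[of 0] ccG[of 0] by (simp add: H_def)
  next
    case (insert t S)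
    have e: "H (insert t S) = (\<lambda>y. (\<lambda>y. K t y * cnj (K t y)) y + H S y)"
      using insert by (simp add: H_def)
    have m: "(\<lambda>y. K t y * cnj (K t y)) \<in> CG" using KG[of t]
      by (auto simp: CG_def intro!: continuous_intros)
    have "ch (\<lambda>y. K t y * cnj (K t y)) = 0" using mult[OF KG cnjG[OF KG], of t t] K0 by simp
    then show ?case unfolding e using add[OF m] insert m
      by (auto simp: CG_def intro!: continuous_intros)
  qed
  have Hnz: "H T y \<noteq> 0" for y
  proof -
    obtain t where t: "t \<in> T" "K t y \<noteq> 0" using T(2) by auto
    have "H T y = of_real (\<Sum>t\<in>T. (cmod (K t y))\<^sup>2)"
      unfolding H_def of_real_sum complex_norm_square by simp
    moreover have "(\<Sum>t\<in>T. (cmod (K t y))\<^sup>2) > 0"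
      using t T(1) by (intro sum_pos2[of T t]) auto
    ultimately show ?thesis by (metis of_real_eq_0_iff less_irrefl)
  qed
  have IG: "(\<lambda>y. 1 / H T y) \<in> CG" using HS[OF T(1)] Hnz
    by (auto simp: CG_def intro!: continuous_intros)
  have "ch (\<lambda>y. H T y * (1 / H T y)) = 0" using mult[OF _ IG, of "H T"] HS[OF T(1)] by simp
  moreover have "(\<lambda>y. H T y * (1 / H T y)) = (\<lambda>_. 1)" using Hnz by auto
  ultimately show False using one by simp
qed

lemma Hausdorff_t2: "Hausdorff_space (euclidean :: 'a::t2_space topology)"
  unfolding Hausdorff_space_def by (simp add: disjnt_def separation_t2)

lemma bump:
  assumes "compact (UNIV::'g::t2_space set)" "open V" "(p::'g) \<in> V"
  shows "\<exists>f\<in>CG. f p = 1 \<and> (\<forall>y. y \<notin> V \<longrightarrow> f y = 0)"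
proof -
  have "compact_space (euclidean :: 'g topology)"
    using assms(1) by (simp add: compact_space_def)
  then have ns: "normal_space (euclidean :: 'g topology)"
    using compact_Hausdorff_or_regular_imp_normal_space Hausdorff_t2 by blast
  obtain f where f: "continuous_map euclidean (top_of_set {0..1::real}) f" "f ` (- V) \<subseteq> {0}" "f ` {p} \<subseteq> {1}"
    using Urysohn_lemma[OF ns, of "- V" "{p}" 0 1] assms(2,3) by (auto simp: disjnt_def closed_Compl)
  have "continuous_on UNIV f" using f(1)
    by (metis continuous_map_into_fulltopology continuous_map_iff_continuous2 subtopology_UNIV)
  then have "(\<lambda>y. complex_of_real (f y)) \<in> CG" by (auto simp: CG_def intro!: continuous_intros)
  then show ?thesis using f(2,3) by (intro bexI[of _ "\<lambda>y. complex_of_real (f y)"]) auto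
qed

context
  fixes act :: "'g::{group_add,topological_space} \<Rightarrow> 'x::topological_space \<Rightarrow> 'x"
  assumes cga: "continuous_group_action act"
begin

lemma act0: "act 0 x = x" and actadd: "act (g + h) x = act g (act h x)"
  using cga by (auto simp: continuous_group_action_def)

lemma orbit_mem: "x \<in> orbit act x"
  unfolding orbit_def using act0 by (metis rangeI)

lemma orbit_act: "orbit act (act g x) = orbit act x"
proof
  show "orbit act (act g x) \<subseteq> orbit act x" unfolding orbit_def
    by (auto simp: actadd[symmetric])
  show "orbit act x \<subseteq> orbit act (act g x)" unfolding orbit_def
  proof
    fix y assume "y \<in> range (\<lambda>h. act h x)"
    then obtain h where "y = act h x" by auto
    then have "y = act (h + - g) (act g x)" by (simp add: actadd[symmetric] add.assoc)
    then show "y \<in> range (\<lambda>h. act h (act g x))" by auto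
  qed
qed

lemma orbit_eq: "y \<in> orbit act x \<Longrightarrow> orbit act y = orbit act x"
proof -
  assume "y \<in> orbit act x"
  then obtain g where "y = act g x" unfolding orbit_def by auto
  then show ?thesis using orbit_act by simp
qed

lemma orbits_mem_eq: "Ob \<in> orbits act \<Longrightarrow> x \<in> Ob \<Longrightarrow> Ob = orbit act x"
  unfolding orbits_def using orbit_eq by auto

lemma istop_orbits: "istopology (\<lambda>U. U \<subseteq> orbits act \<and> open (\<Union>U))"
  unfolding istopology_def
proof (intro conjI allI impI)
  fix S T assume S: "S \<subseteq> orbits act \<and> open (\<Union>S)" and T: "T \<subseteq> orbits act \<and> open (\<Union>T)"
  have "\<Union>(S \<inter> T) = \<Union>S \<inter> \<Union>T"
  proof
    show "\<Union>S \<inter> \<Union>T \<subseteq> \<Union>(S \<inter> T)"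
    proof
      fix x assume "x \<in> \<Union>S \<inter> \<Union>T"
      then obtain A B where "A \<in> S" "B \<in> T" "x \<in> A" "x \<in> B" by auto
      then have "A = B" using S T orbits_mem_eq by (metis subsetD)
      then show "x \<in> \<Union>(S \<inter> T)" using \<open>A \<in> S\<close> \<open>B \<in> T\<close> \<open>x \<in> A\<close> by auto
    qed
  qed auto
  then show "S \<inter> T \<subseteq> orbits act" "open (\<Union>(S \<inter> T))" using S T by auto
next
  fix K assume K: "\<forall>U\<in>K. U \<subseteq> orbits act \<and> open (\<Union>U)"
  then show "\<Union>K \<subseteq> orbits act" "open (\<Union>(\<Union>K))"
  proof -
    show "\<Union>K \<subseteq> orbits act" using K by auto
    have "\<Union>(\<Union>K) = (\<Union>U\<in>K. \<Union>U)" by auto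
    then show "open (\<Union>(\<Union>K))" using K by (auto intro!: open_UN)
  qed
qed

lemma openin_orbits: "openin (orbit_space_topology act) U \<longleftrightarrow> U \<subseteq> orbits act \<and> open (\<Union>U)"
  unfolding orbit_space_topology_def using istop_orbits by simp

lemma topspace_orbits: "topspace (orbit_space_topology act) = orbits act"
proof -
  have "\<Union>(orbits act) = UNIV" using orbit_mem unfolding orbits_def by blast
  then have "openin (orbit_space_topology act) (orbits act)" using openin_orbits by simp
  then show ?thesis using openin_orbits openin_subset[of "orbit_space_topology act"]
    by (metis openin_topspace subset_antisym)
qed

lemma orbit_map_cont: "continuous_map euclidean (orbit_space_topology act) (orbit act)"
  unfolding continuous_map
proof (intro conjI allI impI)
  show "orbit act ` topspace euclidean \<subseteq> topspace (orbit_space_topology act)"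
    by (auto simp: topspace_orbits orbits_def)
  fix U assume "openin (orbit_space_topology act) U"
  then have U: "U \<subseteq> orbits act" "open (\<Union>U)" using openin_orbits by auto
  have "{x \<in> topspace euclidean. orbit act x \<in> U} = \<Union>U"
  proof
    show "\<Union>U \<subseteq> {x \<in> topspace euclidean. orbit act x \<in> U}"
      using U(1) orbits_mem_eq by auto
  qed (auto intro: orbit_mem)
  then show "openin euclidean {x \<in> topspace euclidean. orbit act x \<in> U}" using U by simp
qed

lemma sigma_exists:
  assumes un: "continuous_on UNIV (\<lambda>g::'g. -g)" and phc: "continuous_on UNIV (\<phi>::'x \<Rightarrow> 'g)"
    and phe: "\<And>g x. \<phi> (act g x) = g + \<phi> x"
  shows "\<exists>\<sigma> :: 'x set \<times> 'g \<Rightarrow> 'x.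
       homeomorphic_map (prod_topology (orbit_space_topology act) euclidean) euclidean \<sigma> \<and>
       (\<forall>g h x. act g (\<sigma> (orbit act x, h)) = \<sigma> (orbit act x, g + h))"
proof -
  define \<rho> where "\<rho> x = act (- \<phi> x) x" for x
  have nphc: "continuous_on UNIV (\<lambda>x. - \<phi> x)"
    using continuous_on_compose2[OF un phc subset_UNIV] .
  have \<rho>c: "continuous_on UNIV \<rho>" unfolding \<rho>_def
    by (rule act_cont_neg[OF cga un nphc continuous_on_id])
  have \<rho>act: "\<rho> (act g x) = \<rho> x" for g x
  proof -
    have "- (g + \<phi> x) + g = - \<phi> x" by (simp add: minus_add add.assoc)
    then show ?thesis unfolding \<rho>_def phe by (metis actadd)
  qed
  have \<rho>orb: "\<rho> y = \<rho> x" if "y \<in> orbit act x" for x y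
    using that \<rho>act unfolding orbit_def by auto
  define \<rho>b where "\<rho>b Ob = \<rho> (SOME x. x \<in> Ob)" for Ob :: "'x set"
  have \<rho>b: "\<rho>b (orbit act x) = \<rho> x" for x
    unfolding \<rho>b_def using orbit_mem[of x] by (metis someI \<rho>orb)
  have \<rho>b': "\<rho>b Ob = \<rho> x" if "Ob \<in> orbits act" "x \<in> Ob" for Ob x
    using orbits_mem_eq[OF that] \<rho>b by simp
  define \<sigma> where "\<sigma> p = act (snd p) (\<rho>b (fst p))" for p :: "'x set \<times> 'g"
  define \<tau> where "\<tau> x = (orbit act x, \<phi> x)" for x
  let ?Q = "orbit_space_topology act"
  have \<rho>bc: "continuous_map ?Q euclidean \<rho>b"
    unfolding continuous_map
  proof (intro conjI allI impI)
    fix U :: "'x set" assume "openin euclidean U"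
    have e: "\<Union>{Ob \<in> topspace ?Q. \<rho>b Ob \<in> U} = \<rho> -` U"
    proof
      show "\<rho> -` U \<subseteq> \<Union>{Ob \<in> topspace ?Q. \<rho>b Ob \<in> U}"
        using \<rho>b orbit_mem by (auto simp: topspace_orbits orbits_def) blast
      show "\<Union>{Ob \<in> topspace ?Q. \<rho>b Ob \<in> U} \<subseteq> \<rho> -` U"
        using \<rho>b' by (auto simp: topspace_orbits)
    qed
    have "open (\<rho> -` U)" using \<rho>c \<open>openin euclidean U\<close>
      by (simp add: continuous_on_open_vimage)
    then show "openin ?Q {Ob \<in> topspace ?Q. \<rho>b Ob \<in> U}"
      unfolding openin_orbits e by (auto simp: topspace_orbits)
  qed auto
  have actc: "continuous_map (prod_topology euclidean euclidean) euclidean (\<lambda>p::'g\<times>'x. act (fst p) (snd p))"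
    using cga by (simp add: continuous_group_action_def)
  have pc: "continuous_map (prod_topology ?Q euclidean) (prod_topology euclidean euclidean) (\<lambda>p. (snd p, \<rho>b (fst p)))"
    by (intro continuous_map_pairedI continuous_map_snd continuous_map_compose[OF continuous_map_fst \<rho>bc, unfolded o_def])
  have \<sigma>c: "continuous_map (prod_topology ?Q euclidean) euclidean \<sigma>"
    using continuous_map_compose[OF pc actc] unfolding \<sigma>_def o_def by simp
  have \<tau>c: "continuous_map euclidean (prod_topology ?Q euclidean) \<tau>"
    unfolding \<tau>_def using orbit_map_cont phc by (intro continuous_map_pairedI) auto
  have st: "\<sigma> (\<tau> x) = x" for x
  proof -
    have "\<sigma> (\<tau> x) = act (\<phi> x) (act (- \<phi> x) x)" by (simp add: \<sigma>_def \<tau>_def \<rho>b \<rho>_def)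
    also have "\<dots> = x" by (metis actadd act0 right_minus)
    finally show ?thesis .
  qed
  have ts: "\<tau> (\<sigma> p) = p" if pt: "p \<in> topspace (prod_topology ?Q euclidean)" for p
  proof -
    obtain Ob h where p: "p = (Ob, h)" "Ob \<in> orbits act" using pt by (cases p) (auto simp: topspace_orbits)
    then obtain y where y: "Ob = orbit act y" unfolding orbits_def by auto
    have s: "\<sigma> p = act h (act (- \<phi> y) y)" by (simp add: p y \<sigma>_def \<rho>b \<rho>_def)
    have "orbit act (\<sigma> p) = Ob" unfolding s y orbit_act ..
    moreover have "\<phi> (\<sigma> p) = h" unfolding s phe by (simp add: add.assoc)
    ultimately show ?thesis by (simp add: \<tau>_def p)
  qed
  have "homeomorphic_maps (prod_topology ?Q euclidean) euclidean \<sigma> \<tau>"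
    unfolding homeomorphic_maps_def using \<sigma>c \<tau>c st ts by auto
  then have "homeomorphic_map (prod_topology ?Q euclidean) euclidean \<sigma>"
    using homeomorphic_map_maps by blast
  moreover have "act g (\<sigma> (orbit act x, h)) = \<sigma> (orbit act x, g + h)" for g h x
    by (simp add: \<sigma>_def actadd)
  ultimately show ?thesis by blast
qed

lemma rokhlin_from_sigma:
  assumes cpt: "compact (UNIV::'x set)" and un: "continuous_on UNIV (\<lambda>g::'g. -g)"
    and hm: "homeomorphic_map (prod_topology (orbit_space_topology act) euclidean) euclidean (\<sigma> :: 'x set \<times> 'g \<Rightarrow> 'x)"
    and eq: "\<forall>g h x. act g (\<sigma> (orbit act x, h)) = \<sigma> (orbit act x, g + h)"
  shows "rokhlin act"
proof -
  let ?Q = "orbit_space_topology act"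
  obtain \<tau> where hms: "homeomorphic_maps (prod_topology ?Q euclidean) euclidean \<sigma> \<tau>"
    using hm homeomorphic_map_maps by blast
  then have \<tau>c: "continuous_map euclidean (prod_topology ?Q euclidean) \<tau>"
    and ts: "\<And>p. p \<in> topspace (prod_topology ?Q euclidean) \<Longrightarrow> \<tau> (\<sigma> p) = p"
    and st: "\<And>x. \<sigma> (\<tau> x) = x"
    unfolding homeomorphic_maps_def by auto
  have \<tau>top: "\<tau> x \<in> topspace (prod_topology ?Q euclidean)" for x
    using \<tau>c unfolding continuous_map_def by auto
  define \<psi> where "\<psi> x = snd (\<tau> x)" for x
  have \<psi>c: "continuous_on UNIV \<psi>"
    using continuous_map_compose[OF \<tau>c continuous_map_snd] unfolding \<psi>_def o_def by simp
  have \<psi>e: "\<psi> (act k x) = k + \<psi> x" for k x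
  proof -
    obtain Ob h where t: "\<tau> x = (Ob, h)" "Ob \<in> orbits act" using \<tau>top[of x]
      by (cases "\<tau> x") (auto simp: topspace_orbits)
    then obtain y where y: "Ob = orbit act y" unfolding orbits_def by auto
    have "x = \<sigma> (orbit act y, h)" using st[of x] t y by simp
    then have "act k x = \<sigma> (orbit act y, k + h)" using eq by simp
    moreover have "(orbit act y, k + h) \<in> topspace (prod_topology ?Q euclidean)"
      by (auto simp: topspace_orbits orbits_def)
    ultimately have "\<tau> (act k x) = (orbit act y, k + h)" using ts by simp
    then show ?thesis using t by (simp add: \<psi>_def)
  qed
  have arefl: "asymp_eq a a" for a :: "nat \<Rightarrow> 'x \<Rightarrow> complex"
    by (simp add: asymp_eq_def null_seq_def supnorm_zero)
  define \<Phi> where "\<Phi> f = (\<lambda>(n::nat) x. f (\<psi> x))" for f :: "'g \<Rightarrow> complex"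
  have "\<Phi> f \<in> linf_alpha act CX" if f: "f \<in> CG" for f
  proof -
    have fc: "continuous_on UNIV (\<lambda>x. f (\<psi> x))"
      using continuous_on_compose2[OF _ \<psi>c subset_UNIV, of f] f by (simp add: CG_def)
    show ?thesis unfolding linf_alpha_def linf_def
    proof (intro CollectI conjI allI impI)
      show "\<Phi> f n \<in> CX" for n using fc by (simp add: \<Phi>_def CX_def)
      show "bdd_above (range (\<lambda>n. supnorm (\<Phi> f n)))" by (simp add: \<Phi>_def)
      fix g0 :: 'g and e :: real assume "e > 0"
      then obtain U where U: "open U" "g0 \<in> U" "\<forall>g\<in>U. supnorm (\<lambda>x. induced_action act g (\<lambda>x. f (\<psi> x)) x - induced_action act g0 (\<lambda>x. f (\<psi> x)) x) < e"
        using induced_cont[OF cpt cga un fc] by blast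
      then show "\<exists>U. open U \<and> g0 \<in> U \<and> (\<forall>g\<in>U. seqnorm (\<lambda>n x. induced_action act g (\<Phi> f n) x - induced_action act g0 (\<Phi> f n) x) < e)"
        by (intro exI[of _ U]) (simp add: seqnorm_def \<Phi>_def)
    qed
  qed
  moreover have "hom_mod CG \<Phi>" unfolding hom_mod_def by (simp add: \<Phi>_def arefl)
  moreover have "asymp_eq (\<Phi> (\<lambda>_. 1)) (\<lambda>n x. 1)" by (simp add: \<Phi>_def arefl)
  moreover have "null_seq (\<lambda>n x. \<Phi> f n x * b x - b x * \<Phi> f n x)" for f b
    by (simp add: null_seq_def supnorm_zero mult.commute)
  moreover have "asymp_eq (\<Phi> (Lt g f)) (\<lambda>n. induced_action act g (\<Phi> f n))" for g f
  proof -
    have "\<Phi> (Lt g f) = (\<lambda>n. induced_action act g (\<Phi> f n))"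
      by (simp add: \<Phi>_def Lt_def induced_action_def \<psi>e)
    then show ?thesis using arefl by simp
  qed
  ultimately show ?thesis unfolding rokhlin_def by blast
qed

end


theorem theorem4p12:
  fixes act :: "'g::{group_add,t2_space,second_countable_topology} \<Rightarrow> 'x::t2_space \<Rightarrow> 'x"
  assumes "compact (UNIV :: 'x set)"
    and "compact (UNIV :: 'g set)"
    and "topological_group TYPE('g)"
    and "continuous_group_action act"
    and "wesp_comm_Lt TYPE('g) TYPE('x)"
  shows "rokhlin act \<longleftrightarrow>
    (\<exists>\<sigma> :: 'x set \<times> 'g \<Rightarrow> 'x.
       homeomorphic_map (prod_topology (orbit_space_topology act) euclidean) euclidean \<sigma> \<and>
       (\<forall>g h x. act g (\<sigma> (orbit act x, h)) = \<sigma> (orbit act x, g + h)))"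
proof -
  note cptx = assms(1) and cptg = assms(2) and cga = assms(4)
  have un: "continuous_on UNIV (\<lambda>g::'g. -g)" and addc: "continuous_on UNIV (\<lambda>p::'g \<times> 'g. fst p + snd p)"
    using assms(3) by (auto simp: topological_group_def)
  show ?thesis
  proof
    assume "\<exists>\<sigma> :: 'x set \<times> 'g \<Rightarrow> 'x.
       homeomorphic_map (prod_topology (orbit_space_topology act) euclidean) euclidean \<sigma> \<and>
       (\<forall>g h x. act g (\<sigma> (orbit act x, h)) = \<sigma> (orbit act x, g + h))"
    then show "rokhlin act" using rokhlin_from_sigma[OF cga cptx un] by blast
  next
    assume "rokhlin act"
    then obtain \<Phi> :: "('g \<Rightarrow> complex) \<Rightarrow> nat \<Rightarrow> 'x \<Rightarrow> complex" where
      P1: "\<forall>f\<in>CG. \<Phi> f \<in> linf_alpha act CX" and P2: "hom_mod CG \<Phi>" and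
      P3: "asymp_eq (\<Phi> (\<lambda>_. 1)) (\<lambda>n x. 1)" and
      P5: "\<forall>g. \<forall>f\<in>CG. asymp_eq (\<Phi> (Lt g f)) (\<lambda>n. induced_action act g (\<Phi> f n))"
      unfolding rokhlin_def by blast
    have "\<forall>f\<in>CG. \<Phi> f \<in> linf CX" using P1 by (auto simp: linf_alpha_def)
    then obtain \<Psi> :: "('g \<Rightarrow> complex) \<Rightarrow> nat \<Rightarrow> 'x \<Rightarrow> complex" where
      Q1: "\<forall>f\<in>CG. \<Psi> f \<in> linf CX" and Q2: "star_hom CG \<Psi>" and
      Q3: "\<forall>g. \<forall>f\<in>CG. \<Psi> (Lt g f) = (\<lambda>n. induced_action act g (\<Psi> f n))" and
      Q4: "\<forall>f\<in>CG. asymp_eq (\<Psi> f) (\<Phi> f)"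
      using assms(5) CX_cstar[OF cptx] induced_cont_action[OF cptx cga un] P2 P5
      unfolding wesp_comm_Lt_def by blast
    have c1: "(\<lambda>_. 1) \<in> (CG :: ('g \<Rightarrow> complex) set)" by (simp add: CG_def)
    have PsiCX: "\<Psi> f n \<in> CX" if "f \<in> CG" for f n using Q1 that by (auto simp: linf_def)
    have PhiCX: "\<Phi> f n \<in> CX" if "f \<in> CG" for f n using P1 that by (auto simp: linf_alpha_def linf_def)
    have bddCX: "bdd_fun f" if "f \<in> CX" for f :: "'x \<Rightarrow> complex" using cont_bdd[OF cptx] that by (auto simp: CX_def)
    have l1: "(\<lambda>n. supnorm (\<lambda>x. \<Psi> (\<lambda>_. 1) n x - \<Phi> (\<lambda>_. 1) n x)) \<longlonglongrightarrow> 0"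
      using Q4 c1 unfolding asymp_eq_def null_seq_def by blast
    have e1: "eventually (\<lambda>n. supnorm (\<lambda>x. \<Psi> (\<lambda>_. 1) n x - \<Phi> (\<lambda>_. 1) n x) < 1/2) sequentially"
      using order_tendstoD(2)[OF l1, of "1/2"] by simp
    have l2: "(\<lambda>n. supnorm (\<lambda>x. \<Phi> (\<lambda>_. 1) n x - 1)) \<longlonglongrightarrow> 0"
      using P3 unfolding asymp_eq_def null_seq_def by blast
    have e2: "eventually (\<lambda>n. supnorm (\<lambda>x. \<Phi> (\<lambda>_. 1) n x - 1) < 1/2) sequentially"
      using order_tendstoD(2)[OF l2, of "1/2"] by simp
    obtain n where n1: "supnorm (\<lambda>x. \<Psi> (\<lambda>_. 1) n x - \<Phi> (\<lambda>_. 1) n x) < 1/2"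
      and n2: "supnorm (\<lambda>x. \<Phi> (\<lambda>_. 1) n x - 1) < 1/2"
    proof -
      from eventually_happens'[OF _ eventually_conj[OF e1 e2]] show thesis using that by auto
    qed
    have b1: "bdd_fun (\<lambda>x. \<Psi> (\<lambda>_. 1) n x - \<Phi> (\<lambda>_. 1) n x)"
      using bdd_diff bddCX PsiCX PhiCX c1 by blast
    have b2: "bdd_fun (\<lambda>x. \<Phi> (\<lambda>_. 1) n x - 1)"
      using bdd_diff[OF bddCX[OF PhiCX[OF c1]], of "\<lambda>_. 1"] bddCX[of "\<lambda>_. 1"] by (auto simp: CX_def)
    have sa: "\<Psi> (\<lambda>y. f y + h y) n x = \<Psi> f n x + \<Psi> h n x" if "f \<in> CG" "h \<in> CG" for f h x
      using Q2 that unfolding star_hom_def by auto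
    have sm: "\<Psi> (\<lambda>y. f y * h y) n x = \<Psi> f n x * \<Psi> h n x" if "f \<in> CG" "h \<in> CG" for f h x
      using Q2 that unfolding star_hom_def by auto
    have sc: "\<Psi> (\<lambda>y. c * f y) n x = c * \<Psi> f n x" if "f \<in> CG" for c f x
      using Q2 that unfolding star_hom_def by auto
    have one: "\<Psi> (\<lambda>_. 1) n x = 1" for x
    proof -
      have "cmod (\<Psi> (\<lambda>_. 1) n x - 1) \<le> cmod (\<Psi> (\<lambda>_. 1) n x - \<Phi> (\<lambda>_. 1) n x) + cmod (\<Phi> (\<lambda>_. 1) n x - 1)"
        using norm_triangle_ineq[of "\<Psi> (\<lambda>_. 1) n x - \<Phi> (\<lambda>_. 1) n x" "\<Phi> (\<lambda>_. 1) n x - 1"] by simp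
      then have lt: "cmod (\<Psi> (\<lambda>_. 1) n x - 1) < 1"
        using supnorm_ge[OF b1, of x] supnorm_ge[OF b2, of x] n1 n2 by linarith
      have "\<Psi> (\<lambda>_. 1) n x = \<Psi> (\<lambda>_. 1) n x * \<Psi> (\<lambda>_. 1) n x"
        using sm[OF c1 c1, of x] by simp
      then have "\<Psi> (\<lambda>_. 1) n x = 0 \<or> \<Psi> (\<lambda>_. 1) n x = 1"
        by (metis mult_cancel_left1 mult_zero_left)
      then show ?thesis using lt by auto
    qed
    have "\<exists>t. \<forall>f\<in>CG. \<Psi> f n x = f t" for x
      by (rule character_eval[OF cptg, of "\<lambda>f. \<Psi> f n x"]) (auto simp: one sa sm sc)
    then obtain \<phi> where \<phi>: "\<And>x f. f \<in> CG \<Longrightarrow> \<Psi> f n x = f (\<phi> x)" by metis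
    have sep: "s = t" if "\<And>f. f \<in> CG \<Longrightarrow> f s = f t" for s t :: 'g
    proof (rule ccontr)
      assume "s \<noteq> t"
      then obtain f where "f \<in> CG" "f t = 1" "\<forall>y. y \<notin> - {s} \<longrightarrow> f y = 0"
        using bump[OF cptg, of "- {s}" t] by auto
      then show False using that[of f] by auto
    qed
    have LtG: "Lt g f \<in> CG" if "f \<in> CG" for g :: 'g and f
    proof -
      have "continuous_on UNIV (\<lambda>h::'g. - g + h)"
      proof -
        have "continuous_on UNIV (\<lambda>h::'g. (- g, h))" by (intro continuous_intros)
        from continuous_on_compose2[OF addc this subset_UNIV] show ?thesis by simp
      qed
      then show ?thesis using that continuous_on_compose2[of UNIV f UNIV "\<lambda>h. - g + h"]
        by (auto simp: CG_def Lt_def)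
    qed
    have \<phi>e: "\<phi> (act k y) = k + \<phi> y" for k y
    proof -
      have "f (\<phi> (act (- g) y)) = f (- g + \<phi> y)" if "f \<in> CG" for f g
      proof -
        have "f (\<phi> (act (- g) y)) = induced_action act g (\<Psi> f n) y"
          using \<phi>[OF that] by (simp add: induced_action_def)
        also have "\<dots> = \<Psi> (Lt g f) n y" using Q3 that by simp
        also have "\<dots> = Lt g f (\<phi> y)" using \<phi>[OF LtG[OF that]] by simp
        finally show ?thesis by (simp add: Lt_def)
      qed
      then have "\<phi> (act (- g) y) = - g + \<phi> y" for g using sep by blast
      from this[of "- k"] show ?thesis by simp
    qed
    have \<phi>c: "continuous_on UNIV \<phi>"
      unfolding continuous_on_topological
    proof (intro ballI allI impI)
      fix x0 B assume B: "open B" "\<phi> x0 \<in> B"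
      obtain f where f: "f \<in> CG" "f (\<phi> x0) = 1" "\<forall>y. y \<notin> B \<longrightarrow> f y = 0"
        using bump[OF cptg B] by auto
      have "open {x. \<Psi> f n x \<noteq> 0}"
        using PsiCX[OF f(1), of n] by (intro open_Collect_neq) (auto simp: CX_def)
      moreover have "x0 \<in> {x. \<Psi> f n x \<noteq> 0}" using \<phi>[OF f(1)] f(2) by simp
      moreover have "\<phi> y \<in> B" if "y \<in> {x. \<Psi> f n x \<noteq> 0}" for y
        using that \<phi>[OF f(1)] f(3) by auto
      ultimately show "\<exists>A. open A \<and> x0 \<in> A \<and> (\<forall>y\<in>UNIV. y \<in> A \<longrightarrow> \<phi> y \<in> B)" by blast
    qed
    show "\<exists>\<sigma> :: 'x set \<times> 'g \<Rightarrow> 'x.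
       homeomorphic_map (prod_topology (orbit_space_topology act) euclidean) euclidean \<sigma> \<and>
       (\<forall>g h x. act g (\<sigma> (orbit act x, h)) = \<sigma> (orbit act x, g + h))"
      using sigma_exists[OF cga un \<phi>c \<phi>e] by blast
  qed
qed

end
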